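(* Let $\mathcal{S}$ and $\mathcal{S}'$ be square-free staged trees that are statistically equivalent via a bijection $\varphi:\Lambda(\mathcal{S})\to\Lambda(\mathcal{S}')$ between their sets of root-to-leaf paths. Let $\alpha>0$, let $\mathcal{D}=(N_\lambda)_{\lambda\in\Lambda(\mathcal{S})}$ be a complete data sample on $\mathcal{S}$, and let $\mathcal{D}'$ be the corresponding sample on $\mathcal{S}'$, given by $N'_{\varphi(\lambda)}=N_\lambda$. Then $\mathrm{BDepu}(\mathcal{S},\mathcal{D};\alpha)=\mathrm{BDepu}(\mathcal{S}',\mathcal{D}';\alpha)$.
   Context: An event tree is a finite directed rooted tree whose edges are directed away from the root; nodes with no outgoing edges are leaves, all other nodes are situations. A staged tree $\mathcal{S}$ is an event tree together with a partition of its situations into stages $u_1,\dots,u_J$ such that all situations in $u_j$ have the same number $r_j$ of outgoing edges, these being labelled $1,\dots,r_j$ at each situation of $u_j$; the $k$-th edge of every situation in $u_j$ carries the same conditional transition probability $\theta_{jk}$. The staged tree model is the set of probability distributions on the set $\Lambda(\mathcal{S})$ of root-to-leaf paths obtained by choosing for each stage a probability vector $(\theta_{j1},\dots,\theta_{jr_j})$ (positive entries summing to 1) and giving each path the product of the probabilities on its edges. A staged tree is square-free if no two situations on the same root-to-leaf path lie in the same stage. Two staged trees $\mathcal{S},\mathcal{S}'$ are statistically equivalent via a bijection $\varphi:\Lambda(\mathcal{S})\to\Lambda(\mathcal{S}')$ if the model of $\mathcal{S}$ equals $\{p\circ\varphi : p \text{ in the model of } \mathcal{S}'\}$, i.e.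 they represent the same set of distributions. A complete data sample $\mathcal{D}$ assigns to each root-to-leaf path $\lambda$ a number $N_\lambda\ge 0$ of units that traversed it. For stage $u_j$, $n_{jk}$ is the total number of units whose path passes through the $k$-th outgoing edge of some situation in $u_j$, and $\overline{n}_j=\sum_{k=1}^{r_j}n_{jk}$. Given hyperparameters $\alpha_{jk}>0$ with $\overline{\alpha}_j=\sum_{k=1}^{r_j}\alpha_{jk}$, the BD-metric is $$\mathrm{BD}(\mathcal{S},\mathcal{D};\boldsymbol{\alpha})=\prod_{j=1}^{J}\left[\frac{\Gamma(\overline{\alpha}_j)}{\Gamma(\overline{\alpha}_j+\overline{n}_j)}\prod_{k=1}^{r_j}\frac{\Gamma(\alpha_{jk}+n_{jk})}{\Gamma(\alpha_{jk})}\right].$$ For an edge $e$, $\Lambda(e)$ denotes the set of root-to-leaf paths containing $e$. For an imaginary sample size $\alpha>0$, the BDepu score $\mathrm{BDepu}(\mathcal{S},\mathcal{D};\alpha)$ is the BD-metric with $$\alpha_{jk}=\frac{\alpha}{|\Lambda(\mathcal{S})|}\sum_{m=1}^{h_j}|\Lambda(e^m_{jk})|,$$ where $h_j$ is the number of situations in $u_j$ and $e^m_{jk}$ is the $k$-th outgoing edge of the $m$-th situation of $u_j$. *)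

theory Defs
  imports "HOL-Analysis.Analysis" "HOL-Library.Sublist"
begin

text \<open>An ordered event tree is encoded as a finite prefix-closed set of nat lists:
  the node v has children v@[0], ..., v@[m-1]; the k-th outgoing edge of v
  (k = 0, 1, ... corresponding to the labels 1, 2, ... of the paper) leads to v@[k].
  Root-to-leaf paths are identified with leaves.\<close>

definition event_tree :: "nat list set \<Rightarrow> bool" where
  "event_tree T \<longleftrightarrow> finite T \<and> [] \<in> T \<and>
     (\<forall>v k. v @ [k] \<in> T \<longrightarrow> v \<in> T) \<and>
     (\<forall>v j k. v @ [k] \<in> T \<and> j < k \<longrightarrow> v @ [j] \<in> T)"

definition situations :: "nat list set \<Rightarrow> nat list set" where
  "situations T = {v \<in> T. v @ [0] \<in> T}"

definition leaves :: "nat list set \<Rightarrow> nat list set" where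
  "leaves T = {v \<in> T. v @ [0] \<notin> T}"

definition nchildren :: "nat list set \<Rightarrow> nat list \<Rightarrow> nat" where
  "nchildren T v = card {k. v @ [k] \<in> T}"

definition staged_tree :: "nat list set \<Rightarrow> (nat list \<Rightarrow> 'a) \<Rightarrow> bool" where
  "staged_tree T st \<longleftrightarrow> event_tree T \<and>
     (\<forall>u \<in> situations T. \<forall>v \<in> situations T. st u = st v \<longrightarrow> nchildren T u = nchildren T v)"

definition stages :: "nat list set \<Rightarrow> (nat list \<Rightarrow> 'a) \<Rightarrow> 'a set" where
  "stages T st = st ` situations T"

definition stage :: "nat list set \<Rightarrow> (nat list \<Rightarrow> 'a) \<Rightarrow> 'a \<Rightarrow> nat list set" where
  "stage T st j = {v \<in> situations T. st v = j}"

definition stage_deg :: "nat list set \<Rightarrow> (nat list \<Rightarrow> 'a) \<Rightarrow> 'a \<Rightarrow> nat" where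
  "stage_deg T st j = nchildren T (SOME v. v \<in> stage T st j)"

definition square_free :: "nat list set \<Rightarrow> (nat list \<Rightarrow> 'a) \<Rightarrow> bool" where
  "square_free T st \<longleftrightarrow>
     (\<forall>u \<in> situations T. \<forall>v \<in> situations T. strict_prefix u v \<longrightarrow> st u \<noteq> st v)"

definition path_prob :: "(nat list \<Rightarrow> 'a) \<Rightarrow> ('a \<Rightarrow> nat \<Rightarrow> real) \<Rightarrow> nat list \<Rightarrow> real" where
  "path_prob st \<theta> l = (\<Prod>i < length l. \<theta> (st (take i l)) (l ! i))"

definition valid_params :: "nat list set \<Rightarrow> (nat list \<Rightarrow> 'a) \<Rightarrow> ('a \<Rightarrow> nat \<Rightarrow> real) \<Rightarrow> bool" where
  "valid_params T st \<theta> \<longleftrightarrow> (\<forall>j \<in> stages T st.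
      (\<forall>k < stage_deg T st j. \<theta> j k > 0) \<and> (\<Sum>k < stage_deg T st j. \<theta> j k) = 1)"

definition model :: "nat list set \<Rightarrow> (nat list \<Rightarrow> 'a) \<Rightarrow> (nat list \<Rightarrow> real) set" where
  "model T st = {restrict (path_prob st \<theta>) (leaves T) | \<theta>. valid_params T st \<theta>}"

definition stat_equiv ::
  "nat list set \<Rightarrow> (nat list \<Rightarrow> 'a) \<Rightarrow> nat list set \<Rightarrow> (nat list \<Rightarrow> 'b) \<Rightarrow> (nat list \<Rightarrow> nat list) \<Rightarrow> bool" where
  "stat_equiv T st T' st' \<phi> \<longleftrightarrow> bij_betw \<phi> (leaves T) (leaves T') \<and>
     model T st = (\<lambda>q. restrict (q \<circ> \<phi>) (leaves T)) ` model T' st'"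

definition edge_paths :: "nat list set \<Rightarrow> nat list \<Rightarrow> nat \<Rightarrow> nat list set" where
  "edge_paths T v k = {l \<in> leaves T. prefix (v @ [k]) l}"

definition count_n :: "nat list set \<Rightarrow> (nat list \<Rightarrow> 'a) \<Rightarrow> (nat list \<Rightarrow> nat) \<Rightarrow> 'a \<Rightarrow> nat \<Rightarrow> nat" where
  "count_n T st N j k = (\<Sum>l \<in> leaves T.
       if (\<exists>v \<in> stage T st j. prefix (v @ [k]) l) then N l else 0)"

definition BD :: "nat list set \<Rightarrow> (nat list \<Rightarrow> 'a) \<Rightarrow> (nat list \<Rightarrow> nat) \<Rightarrow> ('a \<Rightarrow> nat \<Rightarrow> real) \<Rightarrow> real" where
  "BD T st N a = (\<Prod>j \<in> stages T st.
      let r = stage_deg T st j;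
          abar = (\<Sum>k < r. a j k);
          nbar = real (\<Sum>k < r. count_n T st N j k)
      in Gamma abar / Gamma (abar + nbar) *
         (\<Prod>k < r. Gamma (a j k + real (count_n T st N j k)) / Gamma (a j k)))"

definition BDepu_alpha :: "nat list set \<Rightarrow> (nat list \<Rightarrow> 'a) \<Rightarrow> real \<Rightarrow> 'a \<Rightarrow> nat \<Rightarrow> real" where
  "BDepu_alpha T st \<alpha> j k = \<alpha> / real (card (leaves T)) *
      real (\<Sum>v \<in> stage T st j. card (edge_paths T v k))"

definition BDepu :: "nat list set \<Rightarrow> (nat list \<Rightarrow> 'a) \<Rightarrow> (nat list \<Rightarrow> nat) \<Rightarrow> real \<Rightarrow> real" where
  "BDepu T st N \<alpha> = BD T st N (BDepu_alpha T st \<alpha>)"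

end

theory Submission
  imports Defs
begin


lemma ln_eq_minus_one: assumes "(0::real) < x" "ln x = x - 1" shows "x = 1"
proof -
  have s: "sqrt x > 0" using assms by simp
  have "ln x = 2 * ln (sqrt x)" using assms by (simp add: ln_sqrt)
  also have "\<dots> \<le> 2 * (sqrt x - 1)" using ln_le_minus_one[OF s] by simp
  finally have "x - 1 \<le> 2 * (sqrt x - 1)" using assms by simp
  moreover have "x = sqrt x * sqrt x" using assms by simp
  ultimately have "(sqrt x - 1)^2 \<le> 0" by (simp add: power2_eq_square algebra_simps)
  hence "sqrt x = 1" by simp
  thus ?thesis using assms by simp
qed

lemma gibbs:
  fixes C \<theta> :: "nat \<Rightarrow> real" and d :: nat
  assumes C: "\<And>k. k < d \<Longrightarrow> C k > 0" and th: "\<And>k. k < d \<Longrightarrow> \<theta> k > 0"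
    and s: "(\<Sum>k<d. \<theta> k) = 1"
  defines "Cb \<equiv> (\<Sum>k<d. C k)"
  shows "(\<Sum>k<d. C k * ln (\<theta> k)) \<le> (\<Sum>k<d. C k * ln (C k / Cb))"
    and "(\<Sum>k<d. C k * ln (\<theta> k)) = (\<Sum>k<d. C k * ln (C k / Cb)) \<Longrightarrow> (\<forall>k<d. \<theta> k = C k / Cb)"
proof -
  have d0: "d > 0" using s by (cases d) auto
  have Cb: "Cb > 0" unfolding Cb_def using C d0 by (intro sum_pos) auto
  define x where "x k = \<theta> k * Cb / C k" for k
  have xp: "x k > 0" if "k < d" for k unfolding x_def using C[OF that] th[OF that] Cb by simp
  have eq: "C k * ln (C k / Cb) - C k * ln (\<theta> k) = C k * (x k - 1 - ln (x k)) - (\<theta> k * Cb - C k)"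
    if "k < d" for k
  proof -
    have "ln (x k) = ln (\<theta> k) + ln Cb - ln (C k)" using C[OF that] th[OF that] Cb
      by (simp add: x_def ln_mult ln_div)
    moreover have "ln (C k / Cb) = ln (C k) - ln Cb" using C[OF that] Cb by (simp add: ln_div)
    moreover have "C k * x k = \<theta> k * Cb" using C[OF that] by (simp add: x_def)
    ultimately have e1: "ln (C k / Cb) - ln (\<theta> k) = - ln (x k)" and cx: "C k * x k = \<theta> k * Cb"
      by linarith+
    have e2: "C k * ln (C k / Cb) - C k * ln (\<theta> k) = C k * (ln (C k / Cb) - ln (\<theta> k))"
      by (rule right_diff_distrib[symmetric])
    have e3: "C k * (x k - 1 - ln (x k)) = C k * x k - C k - C k * ln (x k)"
      by (simp add: right_diff_distrib)
    have e4: "C k * (ln (C k / Cb) - ln (\<theta> k)) = - (C k * ln (x k))"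
      unfolding e1 by simp
    show ?thesis using e2 e3 e4 cx by linarith
  qed
  have "(\<Sum>k<d. C k * ln (C k / Cb)) - (\<Sum>k<d. C k * ln (\<theta> k))
      = (\<Sum>k<d. C k * (x k - 1 - ln (x k))) - (\<Sum>k<d. (\<theta> k * Cb - C k))"
    by (simp add: sum_subtractf[symmetric] eq)
  also have "(\<Sum>k<d. (\<theta> k * Cb - C k)) = 0"
    by (simp add: sum_subtractf sum_distrib_right[symmetric] s Cb_def)
  finally have D: "(\<Sum>k<d. C k * ln (C k / Cb)) - (\<Sum>k<d. C k * ln (\<theta> k))
      = (\<Sum>k<d. C k * (x k - 1 - ln (x k)))" by simp
  have nn: "\<And>k. k \<in> {..<d} \<Longrightarrow> 0 \<le> C k * (x k - 1 - ln (x k))"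
    using C xp ln_le_minus_one by (simp add: less_imp_le)
  have "0 \<le> (\<Sum>k<d. C k * (x k - 1 - ln (x k)))" by (rule sum_nonneg) (use nn in auto)
  thus "(\<Sum>k<d. C k * ln (\<theta> k)) \<le> (\<Sum>k<d. C k * ln (C k / Cb))" using D by linarith
  assume e: "(\<Sum>k<d. C k * ln (\<theta> k)) = (\<Sum>k<d. C k * ln (C k / Cb))"
  hence "(\<Sum>k<d. C k * (x k - 1 - ln (x k))) = 0" using D by simp
  hence z: "\<forall>k\<in>{..<d}. C k * (x k - 1 - ln (x k)) = 0"
    using sum_nonneg_eq_0_iff[of "{..<d}" "\<lambda>k. C k * (x k - 1 - ln (x k))"] nn by simp
  show "\<forall>k<d. \<theta> k = C k / Cb"
  proof (intro allI impI)
    fix k assume k: "k < d"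
    hence "x k - 1 - ln (x k) = 0" using z C[OF k] by force
    hence "x k = 1" using ln_eq_minus_one[OF xp[OF k]] by simp
    thus "\<theta> k = C k / Cb" using C[OF k] Cb by (simp add: x_def field_simps)
  qed
qed


lemma gamma_succ: "(x::real) > 0 \<Longrightarrow> Gamma (x + 1) = x * Gamma x"
  by (rule Gamma_plus1) (auto dest: nonpos_Ints_nonpos)

lemma downclosed_eq: assumes "finite (S::nat set)" "\<And>k j. k \<in> S \<Longrightarrow> j < k \<Longrightarrow> j \<in> S"
  shows "S = {..<card S}"
proof (cases "S = {}")
  case True thus ?thesis by simp
next
  case False
  define m where "m = Max S"
  have "S = {..m}"
  proof
    show "S \<subseteq> {..m}" using assms(1) by (auto simp: m_def)
    show "{..m} \<subseteq> S"
    proof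
      fix j assume "j \<in> {..m}"
      moreover have "m \<in> S" using assms(1) False by (simp add: m_def)
      ultimately show "j \<in> S" using assms(2)[of m j] by (cases "j = m") auto
    qed
  qed
  thus ?thesis by (simp add: lessThan_Suc_atMost[symmetric])
qed

locale sqf =
  fixes T :: "nat list set" and st :: "nat list \<Rightarrow> 'a"
  assumes stt: "staged_tree T st" and sqf: "square_free T st"
begin

lemma et: "event_tree T" using stt by (simp add: staged_tree_def)
lemma fin: "finite T" using et by (simp add: event_tree_def)
lemma parent: "v @ [k] \<in> T \<Longrightarrow> v \<in> T" using et unfolding event_tree_def by blast
lemma sibling: "v @ [k] \<in> T \<Longrightarrow> j < k \<Longrightarrow> v @ [j] \<in> T" using et unfolding event_tree_def by blast

lemma app_closed: "u @ w \<in> T \<Longrightarrow> u \<in> T"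
proof (induction w rule: rev_induct)
  case Nil thus ?case by simp
next
  case (snoc x w)
  have "(u @ w) @ [x] \<in> T" using snoc.prems by simp
  hence "u @ w \<in> T" by (rule parent)
  thus ?case by (rule snoc.IH)
qed

lemma prefix_closed: "prefix u v \<Longrightarrow> v \<in> T \<Longrightarrow> u \<in> T"
  by (auto simp: prefix_def intro: app_closed)

lemma children: assumes "v \<in> T" shows "{k. v @ [k] \<in> T} = {..<nchildren T v}"
proof -
  have "finite ((\<lambda>k. v @ [k]) -` T)" by (rule finite_vimageI) (use fin in \<open>auto simp: inj_def\<close>)
  hence f: "finite {k. v @ [k] \<in> T}" by (simp add: vimage_def)
  show ?thesis unfolding nchildren_def by (rule downclosed_eq[OF f]) (auto intro: sibling)
qed

lemma child_iff: "v \<in> T \<Longrightarrow> v @ [k] \<in> T \<longleftrightarrow> k < nchildren T v"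
  using children[of v] by blast

lemma sit_T: "v \<in> situations T \<Longrightarrow> v \<in> T" by (simp add: situations_def)
lemma nch_pos: "v \<in> situations T \<Longrightarrow> 0 < nchildren T v"
  using child_iff[of v 0] by (simp add: situations_def)

lemma take_sit: assumes "l \<in> T" "i < length l"
  shows "take i l \<in> situations T" "l ! i < nchildren T (take i l)"
proof -
  have e: "take (Suc i) l = take i l @ [l ! i]" using assms(2) by (rule take_Suc_conv_app_nth)
  have "take (Suc i) l \<in> T" using assms(1) prefix_closed take_is_prefix by blast
  hence c: "take i l @ [l ! i] \<in> T" using e by simp
  hence "take i l @ [0] \<in> T" by (cases "l ! i") (auto intro: sibling)
  moreover have "take i l \<in> T" using c parent by blast
  ultimately show "take i l \<in> situations T" by (simp add: situations_def)
  show "l ! i < nchildren T (take i l)" using c child_iff \<open>take i l \<in> T\<close> by blast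
qed

lemma deg: assumes "v \<in> situations T" shows "stage_deg T st (st v) = nchildren T v"
proof -
  have vs: "v \<in> stage T st (st v)" using assms by (simp add: stage_def)
  define w where "w = (SOME w. w \<in> stage T st (st v))"
  have "w \<in> stage T st (st v)" unfolding w_def using vs by (rule someI)
  hence w: "w \<in> situations T" "st w = st v" unfolding stage_def by simp_all
  have "\<forall>u \<in> situations T. \<forall>v \<in> situations T. st u = st v \<longrightarrow> nchildren T u = nchildren T v"
    using stt unfolding staged_tree_def by blast
  hence "nchildren T w = nchildren T v" using w assms by blast
  thus ?thesis unfolding stage_deg_def w_def[symmetric] .
qed

lemma stages_fin: "finite (stages T st)"
  unfolding stages_def situations_def using fin by simp
lemma stage_fin: "finite (stage T st j)"
  unfolding stage_def situations_def using fin by simp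
lemma leaves_fin: "finite (leaves T)"
  unfolding leaves_def using fin by simp

lemma st_inj_path: assumes "l \<in> T" "i < length l" "i' < length l" "st (take i l) = st (take i' l)"
  shows "i = i'"
proof (rule ccontr)
  assume ne: "i \<noteq> i'"
  have *: False if ab: "a < b" "b < length l" "st (take a l) = st (take b l)" for a b
  proof -
    have "take a (take b l) = take a l" using ab by (simp add: min_def)
    hence "prefix (take a l) (take b l)" using take_is_prefix[of a "take b l"] by simp
    moreover have la: "length (take a l) = a" "length (take b l) = b" using ab by auto
    have "take a l \<noteq> take b l"
    proof
      assume "take a l = take b l"
      hence "length (take a l) = length (take b l)" by simp
      thus False using la ab by simp
    qed
    ultimately have sp: "strict_prefix (take a l) (take b l)" by (simp add: strict_prefix_def)
    have "take a l \<in> situations T" "take b l \<in> situations T"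
      using take_sit(1)[OF assms(1)] ab by auto
    thus False using sqf sp ab(3) unfolding square_free_def by blast
  qed
  show False using ne assms(2,3,4) *[of i i'] *[of i' i] by (cases "i < i'") auto
qed

definition ind :: "nat list \<Rightarrow> 'a \<Rightarrow> nat \<Rightarrow> bool" where
  "ind l j k \<longleftrightarrow> (\<exists>v \<in> stage T st j. prefix (v @ [k]) l)"

lemma Pl_eq: assumes "l \<in> T"
  shows "{(j,k). ind l j k} = (\<lambda>i. (st (take i l), l ! i)) ` {..<length l}"
proof
  show "{(j,k). ind l j k} \<subseteq> (\<lambda>i. (st (take i l), l ! i)) ` {..<length l}"
  proof clarify
    fix j k assume "ind l j k"
    then obtain v where v: "v \<in> stage T st j" "prefix (v @ [k]) l" by (auto simp: ind_def)
    then obtain w where w: "l = v @ [k] @ w" by (auto simp: prefix_def)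
    have "length v < length l" "take (length v) l = v" "l ! length v = k" "st v = j"
      using w v(1) by (auto simp: stage_def)
    thus "(j, k) \<in> (\<lambda>i. (st (take i l), l ! i)) ` {..<length l}"
      by (intro image_eqI[of _ _ "length v"]) auto
  qed
  show "(\<lambda>i. (st (take i l), l ! i)) ` {..<length l} \<subseteq> {(j,k). ind l j k}"
  proof clarify
    fix i assume i: "i < length l"
    have "take i l \<in> stage T st (st (take i l))" using take_sit[OF assms i] by (simp add: stage_def)
    moreover have "prefix (take i l @ [l ! i]) l"
      using take_Suc_conv_app_nth[OF i] take_is_prefix by metis
    ultimately show "ind l (st (take i l)) (l ! i)" unfolding ind_def by blast
  qed
qed

lemma Pl_inj: "l \<in> T \<Longrightarrow> inj_on (\<lambda>i. (st (take i l), l ! i)) {..<length l}"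
  by (auto simp: inj_on_def intro: st_inj_path)

lemma ind_deg: assumes "l \<in> T" "ind l j k" shows "j \<in> stages T st" "k < stage_deg T st j"
proof -
  obtain i where i: "i < length l" "j = st (take i l)" "k = l ! i"
    using Pl_eq[OF assms(1)] assms(2) by blast
  show "j \<in> stages T st" using take_sit[OF assms(1) i(1)] i by (simp add: stages_def)
  show "k < stage_deg T st j" using take_sit[OF assms(1) i(1)] i deg by simp
qed

lemma ind_unique: assumes "l \<in> T" "ind l j k" "ind l j k'" shows "k = k'"
proof -
  obtain i where i: "i < length l" "j = st (take i l)" "k = l ! i"
    using Pl_eq[OF assms(1)] assms(2) by blast
  obtain i' where i': "i' < length l" "j = st (take i' l)" "k' = l ! i'"
    using Pl_eq[OF assms(1)] assms(3) by blast
  have "i = i'" using st_inj_path[OF assms(1) i(1) i'(1)] i i' by simp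
  thus ?thesis using i i' by simp
qed

lemma prod_path: assumes "l \<in> T"
  shows "(\<Prod>i<length l. g (st (take i l)) (l ! i)) =
    (\<Prod>j\<in>stages T st. \<Prod>k<stage_deg T st j. if ind l j k then g j k else (1::real))"
proof -
  let ?S = "SIGMA j:stages T st. {..<stage_deg T st j}"
  let ?P = "{(j,k). ind l j k}"
  have fS: "finite ?S" using stages_fin by auto
  have "(\<Prod>j\<in>stages T st. \<Prod>k<stage_deg T st j. if ind l j k then g j k else 1)
     = (\<Prod>(j,k)\<in>?S. if ind l j k then g j k else 1)"
    by (rule prod.Sigma) (use stages_fin in auto)
  also have "\<dots> = (\<Prod>x\<in>?S. if x \<in> ?P then case_prod g x else 1)"
    by (rule prod.cong) auto
  also have "\<dots> = prod (case_prod g) (?S \<inter> ?P)" by (rule prod.inter_restrict[OF fS, symmetric])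
  also have "?S \<inter> ?P = ?P" using ind_deg[OF assms] by auto
  also have "prod (case_prod g) ?P = (\<Prod>i<length l. g (st (take i l)) (l ! i))"
    unfolding Pl_eq[OF assms] by (subst prod.reindex[OF Pl_inj[OF assms]]) simp
  finally show ?thesis by simp
qed

lemma sum_path: assumes "l \<in> T"
  shows "(\<Sum>i<length l. g (st (take i l)) (l ! i)) =
    (\<Sum>j\<in>stages T st. \<Sum>k<stage_deg T st j. if ind l j k then g j k else (0::real))"
proof -
  let ?S = "SIGMA j:stages T st. {..<stage_deg T st j}"
  let ?P = "{(j,k). ind l j k}"
  have fS: "finite ?S" using stages_fin by auto
  have "(\<Sum>j\<in>stages T st. \<Sum>k<stage_deg T st j. if ind l j k then g j k else 0)
     = (\<Sum>(j,k)\<in>?S. if ind l j k then g j k else 0)"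
    by (rule sum.Sigma) (use stages_fin in auto)
  also have "\<dots> = (\<Sum>x\<in>?S. if x \<in> ?P then case_prod g x else 0)"
    by (rule sum.cong) auto
  also have "\<dots> = sum (case_prod g) (?S \<inter> ?P)" by (rule sum.inter_restrict[OF fS, symmetric])
  also have "?S \<inter> ?P = ?P" using ind_deg[OF assms] by auto
  also have "sum (case_prod g) ?P = (\<Sum>i<length l. g (st (take i l)) (l ! i))"
    unfolding Pl_eq[OF assms] by (subst sum.reindex[OF Pl_inj[OF assms]]) simp
  finally show ?thesis by simp
qed

lemma leaf_below: assumes "x \<in> T" shows "\<exists>l\<in>leaves T. prefix x l"
proof -
  define E where "E = {y \<in> T. prefix x y}"
  have fE: "finite E" using fin by (simp add: E_def)
  have nE: "E \<noteq> {}" using assms by (auto simp: E_def)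
  define m where "m = Max (length ` E)"
  have "m \<in> length ` E" unfolding m_def using fE nE by (intro Max_in) auto
  then obtain y where y: "y \<in> E" "length y = m" by auto
  have "y @ [0] \<notin> T"
  proof
    assume "y @ [0] \<in> T"
    hence "y @ [0] \<in> E" using y(1) by (auto simp: E_def prefix_def)
    hence "length (y @ [0]) \<in> length ` E" by (rule imageI)
    hence "length (y @ [0]) \<le> m" unfolding m_def using fE by (intro Max_ge) auto
    thus False using y(2) by simp
  qed
  thus ?thesis using y(1) by (auto simp: E_def leaves_def)
qed

lemma leaves_T: "l \<in> leaves T \<Longrightarrow> l \<in> T" by (simp add: leaves_def)

end

context sqf begin

lemma count_eq: "count_n T st N j k = (\<Sum>l\<in>leaves T. if ind l j k then N l else 0)"
  by (simp add: count_n_def ind_def)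

lemma count_suc: assumes "l0 \<in> leaves T"
  shows "count_n T st (N(l0 := Suc (N l0))) j k = count_n T st N j k + (if ind l0 j k then 1 else 0)"
proof -
  have "(\<Sum>l\<in>leaves T. if ind l j k then (N(l0 := Suc (N l0))) l else 0)
      = (\<Sum>l\<in>leaves T. (if ind l j k then N l else 0) + (if l = l0 then (if ind l0 j k then 1 else 0) else 0))"
    by (rule sum.cong) auto
  also have "\<dots> = count_n T st N j k + (if ind l0 j k then 1 else 0)"
    using assms leaves_fin by (simp add: sum.distrib count_eq)
  finally show ?thesis by (simp add: count_eq)
qed

definition sf :: "(nat list \<Rightarrow> nat) \<Rightarrow> ('a \<Rightarrow> nat \<Rightarrow> real) \<Rightarrow> 'a \<Rightarrow> real" where
  "sf N a j = (let r = stage_deg T st j;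
          abar = (\<Sum>k < r. a j k);
          nbar = real (\<Sum>k < r. count_n T st N j k)
      in Gamma abar / Gamma (abar + nbar) *
         (\<Prod>k < r. Gamma (a j k + real (count_n T st N j k)) / Gamma (a j k)))"

lemma BD_sf: "BD T st N a = (\<Prod>j\<in>stages T st. sf N a j)"
  by (simp add: BD_def sf_def)

definition thA :: "(nat list \<Rightarrow> nat) \<Rightarrow> ('a \<Rightarrow> nat \<Rightarrow> real) \<Rightarrow> 'a \<Rightarrow> nat \<Rightarrow> real" where
  "thA N a j k = (a j k + real (count_n T st N j k)) /
     ((\<Sum>k<stage_deg T st j. a j k) + real (\<Sum>k<stage_deg T st j. count_n T st N j k))"

lemma sf_step: assumes l0: "l0 \<in> leaves T" and j: "j \<in> stages T st"
    and apos: "\<forall>k<stage_deg T st j. a j k > 0"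
  shows "sf (N(l0 := Suc (N l0))) a j = sf N a j * (\<Prod>k<stage_deg T st j. if ind l0 j k then thA N a j k else 1)"
proof -
  let ?r = "stage_deg T st j"
  let ?N = "N(l0 := Suc (N l0))"
  obtain v where v: "v \<in> situations T" "j = st v" using j by (auto simp: stages_def)
  have r0: "0 < ?r" using deg[OF v(1)] nch_pos[OF v(1)] v(2) by simp
  define n where "n k = count_n T st N j k" for k
  define abar where "abar = (\<Sum>k<?r. a j k)"
  define nbar where "nbar = real (\<Sum>k<?r. n k)"
  have ab0: "abar > 0" unfolding abar_def using apos r0 by (intro sum_pos) auto
  have nb0: "nbar \<ge> 0" unfolding nbar_def by (rule of_nat_0_le_iff)
  have old: "sf N a j = Gamma abar / Gamma (abar + nbar) * (\<Prod>k<?r. Gamma (a j k + real (n k)) / Gamma (a j k))"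
    by (simp add: sf_def Let_def abar_def nbar_def n_def)
  show ?thesis
  proof (cases "\<exists>k. ind l0 j k")
    case False
    hence "count_n T st ?N j k = count_n T st N j k" for k using count_suc[OF l0] by simp
    hence "sf ?N a j = sf N a j" by (simp add: sf_def)
    thus ?thesis using False by simp
  next
    case True
    then obtain k0 where k0: "ind l0 j k0" by blast
    have k0r: "k0 < ?r" using ind_deg(2)[OF leaves_T[OF l0] k0] .
    have iff: "ind l0 j k \<longleftrightarrow> k = k0" for k using ind_unique[OF leaves_T[OF l0] k0] k0 by blast
    have cnew: "count_n T st ?N j k = n k + (if k = k0 then 1 else 0)" for k
      using count_suc[OF l0] iff by (simp add: n_def)
    have sumnew: "real (\<Sum>k<?r. n k + (if k = k0 then 1 else 0)) = nbar + 1"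
      using k0r by (simp add: sum.distrib nbar_def)
    have pos: "a j k + real (n k) > 0" if "k < ?r" for k using apos that by (simp add: add_pos_nonneg)
    have prodnew: "(\<Prod>k<?r. Gamma (a j k + real (n k + (if k = k0 then 1 else 0))) / Gamma (a j k))
        = (a j k0 + real (n k0)) * (\<Prod>k<?r. Gamma (a j k + real (n k)) / Gamma (a j k))"
    proof -
      have "(\<Prod>k<?r. Gamma (a j k + real (n k + (if k = k0 then 1 else 0))) / Gamma (a j k))
          = (\<Prod>k<?r. (if k = k0 then a j k + real (n k) else 1) * (Gamma (a j k + real (n k)) / Gamma (a j k)))"
      proof (rule prod.cong)
        fix k assume k: "k \<in> {..<?r}"
        show "Gamma (a j k + real (n k + (if k = k0 then 1 else 0))) / Gamma (a j k)
          = (if k = k0 then a j k + real (n k) else 1) * (Gamma (a j k + real (n k)) / Gamma (a j k))"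
        proof (cases "k = k0")
          case True
          have e: "a j k + real (n k + 1) = (a j k + real (n k)) + 1" by simp
          have G: "Gamma (a j k + real (n k + 1)) = (a j k + real (n k)) * Gamma (a j k + real (n k))"
            unfolding e by (rule gamma_succ[OF pos]) (use k in simp)
          show ?thesis unfolding if_P[OF True] G by simp
        qed simp
      qed simp
      also have "\<dots> = (a j k0 + real (n k0)) * (\<Prod>k<?r. Gamma (a j k + real (n k)) / Gamma (a j k))"
        using k0r by (subst prod.distrib) simp
      finally show ?thesis .
    qed
    have thp: "(\<Prod>k<?r. if ind l0 j k then thA N a j k else 1) = (a j k0 + real (n k0)) / (abar + nbar)"
      using k0r by (simp add: iff thA_def n_def abar_def nbar_def)
    have g: "Gamma (abar + nbar + 1) = (abar + nbar) * Gamma (abar + nbar)"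
      using ab0 nb0 by (intro gamma_succ) simp
    have gp: "Gamma (abar + nbar) > 0" using ab0 nb0 by simp
    have "sf ?N a j = Gamma abar / Gamma (abar + nbar + 1) *
        ((a j k0 + real (n k0)) * (\<Prod>k<?r. Gamma (a j k + real (n k)) / Gamma (a j k)))"
      unfolding sf_def Let_def cnew sumnew prodnew abar_def[symmetric] by (simp add: add.assoc)
    also have "\<dots> = sf N a j * ((a j k0 + real (n k0)) / (abar + nbar))"
      unfolding old g using gp ab0 nb0 by (simp add: field_simps)
    finally show ?thesis unfolding thp .
  qed
qed

lemma bd_step: assumes l0: "l0 \<in> leaves T"
    and apos: "\<forall>j\<in>stages T st. \<forall>k<stage_deg T st j. a j k > 0"
  shows "BD T st (N(l0 := Suc (N l0))) a = BD T st N a * path_prob st (thA N a) l0"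
proof -
  have "BD T st (N(l0 := Suc (N l0))) a =
     (\<Prod>j\<in>stages T st. sf N a j * (\<Prod>k<stage_deg T st j. if ind l0 j k then thA N a j k else 1))"
    unfolding BD_sf using sf_step[OF l0] apos by (intro prod.cong) auto
  also have "\<dots> = BD T st N a * (\<Prod>j\<in>stages T st. \<Prod>k<stage_deg T st j. if ind l0 j k then thA N a j k else 1)"
    by (simp add: prod.distrib BD_sf)
  also have "\<dots> = BD T st N a * path_prob st (thA N a) l0"
    unfolding path_prob_def prod_path[OF leaves_T[OF l0]] ..
  finally show ?thesis .
qed

end

context sqf begin

definition Cc :: "(nat list \<Rightarrow> real) \<Rightarrow> 'a \<Rightarrow> nat \<Rightarrow> real" where
  "Cc c j k = (\<Sum>l\<in>leaves T. if ind l j k then c l else 0)"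
definition thS :: "(nat list \<Rightarrow> real) \<Rightarrow> 'a \<Rightarrow> nat \<Rightarrow> real" where
  "thS c j k = Cc c j k / (\<Sum>k<stage_deg T st j. Cc c j k)"
definition qS :: "(nat list \<Rightarrow> real) \<Rightarrow> nat list \<Rightarrow> real" where
  "qS c = restrict (path_prob st (thS c)) (leaves T)"
definition obj :: "(nat list \<Rightarrow> real) \<Rightarrow> (nat list \<Rightarrow> real) \<Rightarrow> real" where
  "obj c p = (\<Sum>l\<in>leaves T. c l * ln (p l))"

lemma stage_sit: assumes "j \<in> stages T st" obtains v where "v \<in> situations T" "j = st v"
  using assms by (auto simp: stages_def)

lemma deg_pos: "j \<in> stages T st \<Longrightarrow> 0 < stage_deg T st j"
  by (metis stage_sit deg nch_pos)

lemma Cc_pos: assumes cpos: "\<forall>l\<in>leaves T. c l > 0" and j: "j \<in> stages T st" and k: "k < stage_deg T st j"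
  shows "Cc c j k > 0"
proof -
  obtain v where v: "v \<in> situations T" "j = st v" using j by (rule stage_sit)
  have "k < nchildren T v" using k deg[OF v(1)] v(2) by simp
  hence "v @ [k] \<in> T" using child_iff[OF sit_T[OF v(1)]] by simp
  then obtain l where l: "l \<in> leaves T" "prefix (v @ [k]) l" using leaf_below by blast
  have i: "ind l j k" unfolding ind_def stage_def using v l(2) by auto
  have "(if ind l j k then c l else 0) \<le> Cc c j k" unfolding Cc_def
    by (rule member_le_sum) (use l(1) cpos leaves_fin in \<open>auto simp: less_imp_le\<close>)
  moreover have "c l > 0" using cpos l(1) by blast
  ultimately show ?thesis using i by simp
qed

lemma thS_valid: assumes cpos: "\<forall>l\<in>leaves T. c l > 0" shows "valid_params T st (thS c)"
  unfolding valid_params_def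
proof (intro ballI conjI allI impI)
  fix j assume j: "j \<in> stages T st"
  have sp: "(\<Sum>k<stage_deg T st j. Cc c j k) > 0"
    using Cc_pos[OF cpos j] deg_pos[OF j] by (intro sum_pos) auto
  show "0 < thS c j k" if "k < stage_deg T st j" for k
    unfolding thS_def using Cc_pos[OF cpos j that] sp by simp
  show "(\<Sum>k<stage_deg T st j. thS c j k) = 1"
    unfolding thS_def using sp by (simp add: sum_divide_distrib[symmetric])
qed

lemma factor_pos: assumes v: "valid_params T st \<theta>" and l: "l \<in> T" and i: "i < length l"
  shows "\<theta> (st (take i l)) (l ! i) > 0"
proof -
  have s: "take i l \<in> situations T" and c: "l ! i < nchildren T (take i l)" using take_sit[OF l i] by auto
  have "st (take i l) \<in> stages T st" using s by (simp add: stages_def)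
  moreover have "l ! i < stage_deg T st (st (take i l))" using c deg[OF s] by simp
  ultimately show ?thesis using v by (simp add: valid_params_def)
qed

lemma obj_pp: assumes v: "valid_params T st \<theta>"
  shows "obj c (restrict (path_prob st \<theta>) (leaves T)) =
    (\<Sum>j\<in>stages T st. \<Sum>k<stage_deg T st j. Cc c j k * ln (\<theta> j k))"
proof -
  have "obj c (restrict (path_prob st \<theta>) (leaves T)) =
     (\<Sum>l\<in>leaves T. c l * (\<Sum>j\<in>stages T st. \<Sum>k<stage_deg T st j. if ind l j k then ln (\<theta> j k) else 0))"
    unfolding obj_def
  proof (rule sum.cong)
    fix l assume l: "l \<in> leaves T"
    have "ln (path_prob st \<theta> l) = (\<Sum>i<length l. ln (\<theta> (st (take i l)) (l ! i)))"
      unfolding path_prob_def using factor_pos[OF v leaves_T[OF l]] by (subst ln_prod) (auto simp: less_imp_neq[symmetric])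
    also have "\<dots> = (\<Sum>j\<in>stages T st. \<Sum>k<stage_deg T st j. if ind l j k then ln (\<theta> j k) else 0)"
      by (rule sum_path[OF leaves_T[OF l]])
    finally show "c l * ln (restrict (path_prob st \<theta>) (leaves T) l) =
        c l * (\<Sum>j\<in>stages T st. \<Sum>k<stage_deg T st j. if ind l j k then ln (\<theta> j k) else 0)"
      using l by simp
  qed simp
  also have "\<dots> = (\<Sum>l\<in>leaves T. \<Sum>j\<in>stages T st. \<Sum>k<stage_deg T st j. (if ind l j k then c l else 0) * ln (\<theta> j k))"
    by (auto simp: sum_distrib_left intro!: sum.cong)
  also have "\<dots> = (\<Sum>j\<in>stages T st. \<Sum>l\<in>leaves T. \<Sum>k<stage_deg T st j. (if ind l j k then c l else 0) * ln (\<theta> j k))"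
    by (rule sum.swap)
  also have "\<dots> = (\<Sum>j\<in>stages T st. \<Sum>k<stage_deg T st j. \<Sum>l\<in>leaves T. (if ind l j k then c l else 0) * ln (\<theta> j k))"
    by (rule sum.cong[OF refl], rule sum.swap)
  also have "\<dots> = (\<Sum>j\<in>stages T st. \<Sum>k<stage_deg T st j. Cc c j k * ln (\<theta> j k))"
    by (simp add: Cc_def sum_distrib_right)
  finally show ?thesis .
qed

lemma mle: assumes cpos: "\<forall>l\<in>leaves T. c l > 0" and p: "p \<in> model T st"
  shows "obj c p \<le> obj c (qS c)" and "obj c p = obj c (qS c) \<Longrightarrow> p = qS c"
proof -
  obtain \<theta> where p_eq: "p = restrict (path_prob st \<theta>) (leaves T)" and v: "valid_params T st \<theta>"
    using p by (auto simp: model_def)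
  define G where "G \<theta>' j = (\<Sum>k<stage_deg T st j. Cc c j k * ln (\<theta>' j k))" for \<theta>' j
  have o1: "obj c p = (\<Sum>j\<in>stages T st. G \<theta> j)" unfolding p_eq obj_pp[OF v] G_def ..
  have o2: "obj c (qS c) = (\<Sum>j\<in>stages T st. G (thS c) j)"
    unfolding qS_def obj_pp[OF thS_valid[OF cpos]] G_def ..
  have gib: "G \<theta> j \<le> G (thS c) j \<and> (G \<theta> j = G (thS c) j \<longrightarrow> (\<forall>k<stage_deg T st j. \<theta> j k = thS c j k))"
    if j: "j \<in> stages T st" for j
  proof -
    have th: "\<And>k. k < stage_deg T st j \<Longrightarrow> \<theta> j k > 0" and s: "(\<Sum>k<stage_deg T st j. \<theta> j k) = 1"
      using v j by (auto simp: valid_params_def)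
    have C: "\<And>k. k < stage_deg T st j \<Longrightarrow> Cc c j k > 0" using Cc_pos[OF cpos j] by blast
    show ?thesis
      using gibbs(1)[of "stage_deg T st j" "Cc c j" "\<theta> j", OF C th s]
        gibbs(2)[of "stage_deg T st j" "Cc c j" "\<theta> j", OF C th s]
      unfolding G_def thS_def by blast
  qed
  show "obj c p \<le> obj c (qS c)" unfolding o1 o2 using gib by (intro sum_mono) blast
  assume eq: "obj c p = obj c (qS c)"
  have "(\<Sum>j\<in>stages T st. G (thS c) j - G \<theta> j) = 0"
    using eq unfolding o1 o2 by (simp add: sum_subtractf)
  hence "\<forall>j\<in>stages T st. G (thS c) j - G \<theta> j = 0"
    using sum_nonneg_eq_0_iff[OF stages_fin, of "\<lambda>j. G (thS c) j - G \<theta> j"] gib by auto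
  hence th: "\<forall>j\<in>stages T st. \<forall>k<stage_deg T st j. \<theta> j k = thS c j k" using gib by auto
  show "p = qS c" unfolding p_eq qS_def
  proof (rule ext)
    fix l
    show "restrict (path_prob st \<theta>) (leaves T) l = restrict (path_prob st (thS c)) (leaves T) l"
    proof (cases "l \<in> leaves T")
      case True
      have "path_prob st \<theta> l = path_prob st (thS c) l" unfolding path_prob_def
      proof (rule prod.cong[OF refl])
        fix i assume "i \<in> {..<length l}"
        hence i: "i < length l" by simp
        have s: "take i l \<in> situations T" and cc: "l ! i < nchildren T (take i l)"
          using take_sit[OF leaves_T[OF True] i] by auto
        have "st (take i l) \<in> stages T st" using s by (simp add: stages_def)
        moreover have "l ! i < stage_deg T st (st (take i l))" using cc deg[OF s] by simp
        ultimately show "\<theta> (st (take i l)) (l ! i) = thS c (st (take i l)) (l ! i)" using th by blast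
      qed
      thus ?thesis using True by simp
    qed simp
  qed
qed

end

context sqf begin

lemma edge_card: "(\<Sum>v\<in>stage T st j. card (edge_paths T v k)) = card {l\<in>leaves T. ind l j k}"
proof -
  have "{l\<in>leaves T. ind l j k} = (\<Union>v\<in>stage T st j. edge_paths T v k)"
    by (auto simp: ind_def edge_paths_def)
  moreover have "card (\<Union>v\<in>stage T st j. edge_paths T v k) = (\<Sum>v\<in>stage T st j. card (edge_paths T v k))"
  proof (rule card_UN_disjoint)
    show "finite (stage T st j)" by (rule stage_fin)
    show "\<forall>v\<in>stage T st j. finite (edge_paths T v k)" using leaves_fin by (auto simp: edge_paths_def)
    show "\<forall>v\<in>stage T st j. \<forall>w\<in>stage T st j. v \<noteq> w \<longrightarrow> edge_paths T v k \<inter> edge_paths T w k = {}"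
    proof (intro ballI impI)
      fix v w assume v: "v \<in> stage T st j" and w: "w \<in> stage T st j" and ne: "v \<noteq> w"
      show "edge_paths T v k \<inter> edge_paths T w k = {}"
      proof (rule ccontr)
        assume "edge_paths T v k \<inter> edge_paths T w k \<noteq> {}"
        then obtain l where l: "prefix (v @ [k]) l" "prefix (w @ [k]) l" by (auto simp: edge_paths_def)
        have "prefix v (v @ [k])" "prefix w (w @ [k])" by simp_all
        hence "prefix v l" "prefix w l" using l by (meson prefix_order.trans)+
        hence "prefix v w \<or> prefix w v" by (rule prefix_same_cases)
        hence sp: "strict_prefix v w \<or> strict_prefix w v" using ne by (auto simp: strict_prefix_def)
        have vs: "v \<in> situations T" "st v = j" "w \<in> situations T" "st w = j" using v w by (auto simp: stage_def)
        have "\<forall>u \<in> situations T. \<forall>v \<in> situations T. strict_prefix u v \<longrightarrow> st u \<noteq> st v"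
          using sqf unfolding square_free_def by blast
        thus False using sp vs by metis
      qed
    qed
  qed
  ultimately show ?thesis by simp
qed

lemma leaves_ne: "leaves T \<noteq> {}"
proof -
  have "[] \<in> T" using et by (simp add: event_tree_def)
  thus ?thesis using leaf_below by blast
qed

lemma cardL: "card (leaves T) > 0" using leaves_fin leaves_ne by (simp add: card_gt_0_iff)

definition cN :: "real \<Rightarrow> (nat list \<Rightarrow> nat) \<Rightarrow> nat list \<Rightarrow> real" where
  "cN \<alpha> N l = \<alpha> / real (card (leaves T)) + real (N l)"

lemma alpha_link: "BDepu_alpha T st \<alpha> j k + real (count_n T st N j k) = Cc (cN \<alpha> N) j k"
proof -
  have r1: "real (card {l\<in>leaves T. ind l j k}) = (\<Sum>l\<in>leaves T. if ind l j k then 1 else 0)"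
  proof -
    have "real (card {l\<in>leaves T. ind l j k}) = (\<Sum>l\<in>{l\<in>leaves T. ind l j k}. (1::real))" by simp
    also have "\<dots> = (\<Sum>l\<in>leaves T. if ind l j k then 1 else 0)" by (rule sum.inter_filter[OF leaves_fin])
    finally show ?thesis .
  qed
  have r2: "real (count_n T st N j k) = (\<Sum>l\<in>leaves T. if ind l j k then real (N l) else 0)"
    unfolding count_eq of_nat_sum by (rule sum.cong) auto
  show ?thesis unfolding BDepu_alpha_def edge_card r1 r2 Cc_def cN_def
    by (auto simp: sum_distrib_left sum.distrib[symmetric] intro!: sum.cong)
qed

lemma cN_pos: "\<alpha> > 0 \<Longrightarrow> \<forall>l\<in>leaves T. cN \<alpha> N l > 0"
  using cardL by (simp add: cN_def add_pos_nonneg)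

lemma thA_eq: "thA N (BDepu_alpha T st \<alpha>) = thS (cN \<alpha> N)"
proof (intro ext)
  fix j k
  have "(\<Sum>k<stage_deg T st j. BDepu_alpha T st \<alpha> j k) + real (\<Sum>k<stage_deg T st j. count_n T st N j k)
      = (\<Sum>k<stage_deg T st j. Cc (cN \<alpha> N) j k)"
    by (simp add: of_nat_sum sum.distrib[symmetric] alpha_link)
  thus "thA N (BDepu_alpha T st \<alpha>) j k = thS (cN \<alpha> N) j k" unfolding thA_def thS_def alpha_link by simp
qed

lemma apos: assumes "\<alpha> > 0"
  shows "\<forall>j\<in>stages T st. \<forall>k<stage_deg T st j. BDepu_alpha T st \<alpha> j k > 0"
proof (intro ballI allI impI)
  fix j k assume j: "j \<in> stages T st" and k: "k < stage_deg T st j"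
  have "count_n T st (\<lambda>_. 0) j k = 0" by (simp add: count_eq)
  hence "BDepu_alpha T st \<alpha> j k = Cc (cN \<alpha> (\<lambda>_. 0)) j k" using alpha_link[where N="\<lambda>_. 0" and \<alpha>=\<alpha> and j=j and k=k] by simp
  thus "BDepu_alpha T st \<alpha> j k > 0" using Cc_pos[OF cN_pos[OF assms] j k] by simp
qed

lemma bdepu_step: assumes l0: "l0 \<in> leaves T" and a: "\<alpha> > 0"
  shows "BDepu T st (N(l0 := Suc (N l0))) \<alpha> = BDepu T st N \<alpha> * qS (cN \<alpha> N) l0"
  unfolding BDepu_def bd_step[OF l0 apos[OF a]] thA_eq qS_def using l0 by simp

lemma bdepu_zero: assumes z: "\<forall>l\<in>leaves T. N l = 0" and a: "\<alpha> > 0"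
  shows "BDepu T st N \<alpha> = 1"
proof -
  have c0: "count_n T st N j k = 0" for j k unfolding count_eq using z by (intro sum.neutral) auto
  have "sf N (BDepu_alpha T st \<alpha>) j = 1" if j: "j \<in> stages T st" for j
  proof -
    have ap: "\<And>k. k < stage_deg T st j \<Longrightarrow> BDepu_alpha T st \<alpha> j k > 0" using apos[OF a] j by blast
    have p1: "(\<Prod>k<stage_deg T st j. Gamma (BDepu_alpha T st \<alpha> j k + 0) / Gamma (BDepu_alpha T st \<alpha> j k)) = 1"
    proof (rule prod.neutral, intro ballI)
      fix k assume "k \<in> {..<stage_deg T st j}"
      hence "Gamma (BDepu_alpha T st \<alpha> j k) > 0" using ap by simp
      thus "Gamma (BDepu_alpha T st \<alpha> j k + 0) / Gamma (BDepu_alpha T st \<alpha> j k) = 1" by simp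
    qed
    have "(\<Sum>k<stage_deg T st j. BDepu_alpha T st \<alpha> j k) > 0"
      using ap deg_pos[OF j] by (intro sum_pos) auto
    hence "Gamma (\<Sum>k<stage_deg T st j. BDepu_alpha T st \<alpha> j k) > 0" by simp
    thus ?thesis using p1 unfolding sf_def Let_def c0 by simp
  qed
  thus ?thesis unfolding BDepu_def BD_sf by (intro prod.neutral) blast
qed

end

theorem theorem1:
  fixes T :: "nat list set" and st :: "nat list \<Rightarrow> 'a"
    and T' :: "nat list set" and st' :: "nat list \<Rightarrow> 'b"
    and \<phi> :: "nat list \<Rightarrow> nat list"
    and N N' :: "nat list \<Rightarrow> nat" and \<alpha> :: real
  assumes "staged_tree T st" and "staged_tree T' st'"
    and "square_free T st" and "square_free T' st'"
    and "stat_equiv T st T' st' \<phi>"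
    and "\<alpha> > 0"
    and "\<forall>l \<in> leaves T. N' (\<phi> l) = N l"
  shows "BDepu T st N \<alpha> = BDepu T' st' N' \<alpha>"
proof -
  interpret A: sqf T st using assms(1,3) by (rule sqf.intro)
  interpret B: sqf T' st' using assms(2,4) by (rule sqf.intro)
  have bij: "bij_betw \<phi> (leaves T) (leaves T')" using assms(5) by (simp add: stat_equiv_def)
  have mod: "model T st = (\<lambda>q. restrict (q \<circ> \<phi>) (leaves T)) ` model T' st'"
    using assms(5) by (simp add: stat_equiv_def)
  have card: "card (leaves T') = card (leaves T)" using bij_betw_same_card[OF bij] by simp
  have inj: "inj_on \<phi> (leaves T)" and img: "\<phi> ` leaves T = leaves T'" using bij by (auto simp: bij_betw_def)
  have transfer: "A.qS (A.cN \<alpha> M) l = B.qS (B.cN \<alpha> M') (\<phi> l)"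
    if MM: "\<forall>l\<in>leaves T. M' (\<phi> l) = M l" and l: "l \<in> leaves T" for M M' l
  proof -
    let ?c = "A.cN \<alpha> M"
    let ?c' = "B.cN \<alpha> M'"
    have cc: "?c' (\<phi> x) = ?c x" if "x \<in> leaves T" for x
      using MM that card by (simp add: A.cN_def B.cN_def)
    have objt: "A.obj ?c (restrict (p' \<circ> \<phi>) (leaves T)) = B.obj ?c' p'" for p'
    proof -
      have "A.obj ?c (restrict (p' \<circ> \<phi>) (leaves T)) = (\<Sum>x\<in>leaves T. ?c' (\<phi> x) * ln (p' (\<phi> x)))"
        unfolding A.obj_def by (rule sum.cong) (auto simp: cc)
      also have "\<dots> = B.obj ?c' p'" unfolding B.obj_def by (rule sum.reindex_bij_betw[OF bij])
      finally show ?thesis .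
    qed
    have cp: "\<forall>x\<in>leaves T. ?c x > 0" by (rule A.cN_pos[OF assms(6)])
    have cp': "\<forall>x\<in>leaves T'. ?c' x > 0" by (rule B.cN_pos[OF assms(6)])
    have q'm: "B.qS ?c' \<in> model T' st'" unfolding B.qS_def model_def using B.thS_valid[OF cp'] by blast
    hence r1: "restrict (B.qS ?c' \<circ> \<phi>) (leaves T) \<in> model T st" using mod by blast
    have qm: "A.qS ?c \<in> model T st" unfolding A.qS_def model_def using A.thS_valid[OF cp] by blast
    then obtain r where r: "r \<in> model T' st'" "A.qS ?c = restrict (r \<circ> \<phi>) (leaves T)" using mod by blast
    have "A.obj ?c (A.qS ?c) = B.obj ?c' r" using r(2) objt by simp
    also have "\<dots> \<le> B.obj ?c' (B.qS ?c')" by (rule B.mle(1)[OF cp' r(1)])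
    also have "\<dots> = A.obj ?c (restrict (B.qS ?c' \<circ> \<phi>) (leaves T))" using objt by simp
    finally have le: "A.obj ?c (A.qS ?c) \<le> A.obj ?c (restrict (B.qS ?c' \<circ> \<phi>) (leaves T))" .
    have "A.obj ?c (restrict (B.qS ?c' \<circ> \<phi>) (leaves T)) \<le> A.obj ?c (A.qS ?c)" by (rule A.mle(1)[OF cp r1])
    hence "restrict (B.qS ?c' \<circ> \<phi>) (leaves T) = A.qS ?c" using le A.mle(2)[OF cp r1] by linarith
    hence "restrict (B.qS ?c' \<circ> \<phi>) (leaves T) l = A.qS ?c l" by simp
    thus ?thesis using l by simp
  qed
  have main: "\<forall>N N'. (\<forall>l\<in>leaves T. N' (\<phi> l) = N l) \<longrightarrow> (\<Sum>l\<in>leaves T. N l) = S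
      \<longrightarrow> BDepu T st N \<alpha> = BDepu T' st' N' \<alpha>" for S
  proof (induction S)
    case 0
    show ?case
    proof (intro allI impI)
      fix N N' :: "nat list \<Rightarrow> nat"
      assume NN: "\<forall>l\<in>leaves T. N' (\<phi> l) = N l" and s: "(\<Sum>l\<in>leaves T. N l) = 0"
      have z: "\<forall>l\<in>leaves T. N l = 0" using s A.leaves_fin by simp
      have z': "\<forall>l\<in>leaves T'. N' l = 0"
      proof
        fix l assume "l \<in> leaves T'"
        then obtain x where "x \<in> leaves T" "l = \<phi> x" using img by blast
        thus "N' l = 0" using z NN by simp
      qed
      show "BDepu T st N \<alpha> = BDepu T' st' N' \<alpha>"
        using A.bdepu_zero[OF z assms(6)] B.bdepu_zero[OF z' assms(6)] by simp
    qed
  next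
    case (Suc S)
    show ?case
    proof (intro allI impI)
      fix N N' :: "nat list \<Rightarrow> nat"
      assume NN: "\<forall>l\<in>leaves T. N' (\<phi> l) = N l" and s: "(\<Sum>l\<in>leaves T. N l) = Suc S"
      obtain l0 where l0: "l0 \<in> leaves T" "N l0 > 0"
      proof (rule ccontr)
        assume "\<not> thesis"
        hence "\<forall>l\<in>leaves T. N l = 0" using that by auto
        thus False using s by simp
      qed
      define M where "M = N(l0 := N l0 - 1)"
      define M' where "M' = N'(\<phi> l0 := N' (\<phi> l0) - 1)"
      have NM: "N = M(l0 := Suc (M l0))" using l0 by (auto simp: M_def)
      have "N' (\<phi> l0) > 0" using NN l0 by simp
      hence NM': "N' = M'(\<phi> l0 := Suc (M' (\<phi> l0)))" by (auto simp: M'_def)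
      have MM: "\<forall>l\<in>leaves T. M' (\<phi> l) = M l"
      proof
        fix l assume l: "l \<in> leaves T"
        show "M' (\<phi> l) = M l"
        proof (cases "l = l0")
          case True thus ?thesis using NN l by (simp add: M_def M'_def)
        next
          case False
          hence "\<phi> l \<noteq> \<phi> l0" using inj l l0(1) by (auto dest: inj_onD)
          thus ?thesis using NN l False by (simp add: M_def M'_def)
        qed
      qed
      have "(\<Sum>l\<in>leaves T. N l) = (\<Sum>l\<in>leaves T. M l + (if l = l0 then 1 else 0))"
        by (rule sum.cong) (auto simp: NM)
      also have "\<dots> = (\<Sum>l\<in>leaves T. M l) + 1" using l0(1) A.leaves_fin by (simp add: sum.distrib)
      finally have sM: "(\<Sum>l\<in>leaves T. M l) = S" using s by simp
      have IH: "BDepu T st M \<alpha> = BDepu T' st' M' \<alpha>" using Suc.IH MM sM by blast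
      have l0': "\<phi> l0 \<in> leaves T'" using img l0(1) by blast
      have e1: "BDepu T st N \<alpha> = BDepu T st M \<alpha> * A.qS (A.cN \<alpha> M) l0"
        by (subst NM) (rule A.bdepu_step[OF l0(1) assms(6)])
      have e2: "BDepu T' st' N' \<alpha> = BDepu T' st' M' \<alpha> * B.qS (B.cN \<alpha> M') (\<phi> l0)"
        by (subst NM') (rule B.bdepu_step[OF l0' assms(6)])
      show "BDepu T st N \<alpha> = BDepu T' st' N' \<alpha>"
        unfolding e1 e2 IH transfer[OF MM l0(1)] ..
    qed
  qed
  show ?thesis using main assms(7) by blast
qed


end
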